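(* Let $0\le\beta<1$ and $\Delta>1$ be constants and let $q\ge3(1-\beta)\Delta+2$. Define $f_q:\mathbb{R}_{\ge0}\to\mathbb{R}_{\ge0}$ by $f_q(x)=\frac{2(1-\beta)}{q-1-(1-\beta)x}$ if $x\le\frac{q-1}{1-\beta}-2$ and $f_q(x)=1$ otherwise. Let $X\sim\mathrm{Bin}(n,\Delta/n)$. Then for all sufficiently large $n$, $\mathbb{E}[f_q(X)]<\frac{1}{\Delta}$. *)

theory Defs
  imports "HOL-Probability.Probability"
begin

definition f_q :: "real \<Rightarrow> real \<Rightarrow> real \<Rightarrow> real" where
  "f_q \<beta> q x = (if x \<le> (q - 1) / (1 - \<beta>) - 2
                 then 2 * (1 - \<beta>) / (q - 1 - (1 - \<beta>) * x)
                 else 1)"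

end

theory Submission
  imports Defs
begin

abbreviation EB :: "nat \<Rightarrow> real \<Rightarrow> (nat \<Rightarrow> real) \<Rightarrow> real" where
  "EB n p f \<equiv> measure_pmf.expectation (binomial_pmf n p) f"

lemma EB_Suc:
  fixes f :: "nat \<Rightarrow> real"
  assumes p: "0 \<le> p" "p \<le> 1"
  shows "EB (Suc n) p f = p * EB n p (\<lambda>k. f (Suc k)) + (1 - p) * EB n p f"
proof -
  have eq: "binomial_pmf (Suc n) p = bernoulli_pmf p \<bind> (\<lambda>b. map_pmf (\<lambda>k. (if b then 1 else 0) + k) (binomial_pmf n p))"
    using binomial_pmf_Suc[of p n] p by (simp add: map_pmf_def)
  have fin: "finite (set_pmf (map_pmf (\<lambda>k. (if b then 1 else 0) + k) (binomial_pmf n p)))" for b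
    using p finite_set_pmf_binomial_pmf[of p n] by auto
  have "EB (Suc n) p f = (\<Sum>b\<in>UNIV. pmf (bernoulli_pmf p) b *\<^sub>R
        measure_pmf.expectation (map_pmf (\<lambda>k. (if b then 1 else 0) + k) (binomial_pmf n p)) f)"
    unfolding eq by (rule pmf_expectation_bind) (use fin in auto)
  also have "\<dots> = p * EB n p (\<lambda>k. f (Suc k)) + (1 - p) * EB n p f"
    using p by (simp add: UNIV_bool)
  finally show ?thesis .
qed

lemma EB_add:
  assumes "0 \<le> p" "p \<le> 1"
  shows "EB n p (\<lambda>k. f k + g k) = EB n p f + EB n p g"
  using assms by (intro Bochner_Integration.integral_add) auto

lemma EB_cmult: "EB n p (\<lambda>k. c * f k) = c * EB n p f"
  by (rule integral_mult_right_zero)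

lemma EB_const: "EB n p (\<lambda>k. c) = c"
  by simp

lemma M1:
  assumes p: "0 \<le> p" "p \<le> 1"
  shows "EB n p (\<lambda>k. real k) = real n * p"
proof (induction n)
  case 0 then show ?case using p by (simp add: binomial_pmf_0)
next
  case (Suc n)
  have e: "(\<lambda>k. real (Suc k)) = (\<lambda>k. real k + 1)" by auto
  show ?case using Suc p by (simp add: EB_Suc e EB_add algebra_simps)
qed

lemma M2:
  assumes p: "0 \<le> p" "p \<le> 1"
  shows "EB n p (\<lambda>k. real k ^ 2) = real n * p + real n * (real n - 1) * p^2"
proof (induction n)
  case 0 then show ?case using p by (simp add: binomial_pmf_0)
next
  case (Suc n)
  have e: "(\<lambda>k. real (Suc k) ^ 2) = (\<lambda>k. real k ^ 2 + (2 * real k + 1))" 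
    by (rule ext) (simp add: power2_eq_square algebra_simps)
  have "EB (Suc n) p (\<lambda>k. real k ^ 2) = p * (EB n p (\<lambda>k. real k ^ 2) + (2 * (real n * p) + 1)) + (1 - p) * EB n p (\<lambda>k. real k ^ 2)"
    using p unfolding EB_Suc[OF p] e by (simp add: EB_add EB_cmult M1)
  then show ?case using Suc by (simp add: power2_eq_square algebra_simps)
qed

lemma M3:
  assumes p: "0 \<le> p" "p \<le> 1"
  shows "EB n p (\<lambda>k. real k ^ 3) = real n * p + 3 * real n * (real n - 1) * p^2 + real n * (real n - 1) * (real n - 2) * p^3"
proof (induction n)
  case 0 then show ?case using p by (simp add: binomial_pmf_0)
next
  case (Suc n)
  have e: "(\<lambda>k. real (Suc k) ^ 3) = (\<lambda>k. real k ^ 3 + (3 * real k ^ 2 + (3 * real k + 1)))" 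
    by (rule ext) (simp add: power3_eq_cube power2_eq_square algebra_simps)
  have "EB (Suc n) p (\<lambda>k. real k ^ 3) = p * (EB n p (\<lambda>k. real k ^ 3) + (3 * (real n * p + real n * (real n - 1) * p^2) + (3 * (real n * p) + 1))) + (1 - p) * EB n p (\<lambda>k. real k ^ 3)"
    using p unfolding EB_Suc[OF p] e by (simp add: EB_add EB_cmult M1 M2)
  then show ?case using Suc by (simp add: power3_eq_cube power2_eq_square algebra_simps)
qed

lemma M4:
  assumes p: "0 \<le> p" "p \<le> 1"
  shows "EB n p (\<lambda>k. real k ^ 4) = real n * p + 7 * real n * (real n - 1) * p^2 + 6 * real n * (real n - 1) * (real n - 2) * p^3 + real n * (real n - 1) * (real n - 2) * (real n - 3) * p^4"
proof (induction n)
  case 0 then show ?case using p by (simp add: binomial_pmf_0)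
next
  case (Suc n)
  have e: "(\<lambda>k. real (Suc k) ^ 4) = (\<lambda>k. real k ^ 4 + (4 * real k ^ 3 + (6 * real k ^ 2 + (4 * real k + 1))))" 
    by (rule ext) (simp add: power4_eq_xxxx power3_eq_cube power2_eq_square algebra_simps)
  have "EB (Suc n) p (\<lambda>k. real k ^ 4) = p * (EB n p (\<lambda>k. real k ^ 4) + (4 * (real n * p + 3 * real n * (real n - 1) * p^2 + real n * (real n - 1) * (real n - 2) * p^3) + (6 * (real n * p + real n * (real n - 1) * p^2) + (4 * (real n * p) + 1)))) + (1 - p) * EB n p (\<lambda>k. real k ^ 4)"
    using p unfolding EB_Suc[OF p] e by (simp add: EB_add EB_cmult M1 M2 M3)
  then show ?case using Suc by (simp add: power4_eq_xxxx power3_eq_cube power2_eq_square algebra_simps)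
qed


lemma C1:
  assumes p: "0 \<le> p" "p \<le> 1"
  shows "EB n p (\<lambda>k. real k - c) = real n * p - c"
proof -
  have e: "(\<lambda>k. real k - c) = (\<lambda>k. real k + (- c))" by auto
  show ?thesis using p unfolding e by (simp add: EB_add M1)
qed

lemma C2:
  assumes p: "0 \<le> p" "p \<le> 1"
  shows "EB n p (\<lambda>k. (real k - real n * p) ^ 2) = real n * p * (1 - p)"
proof -
  define c where "c = real n * p"
  have e: "(\<lambda>k. (real k - c) ^ 2) = (\<lambda>k. real k ^ 2 + ((-2*c) * real k + c^2))"
    by (rule ext) (simp add: power2_eq_square algebra_simps)
  have "EB n p (\<lambda>k. (real k - c) ^ 2) = (real n * p + real n * (real n - 1) * p^2) + ((-2*c) * (real n * p) + c^2)"
    using p unfolding e by (simp add: EB_add EB_cmult M1 M2)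
  then show ?thesis unfolding c_def by (simp add: power2_eq_square algebra_simps)
qed

lemma C3:
  assumes p: "0 \<le> p" "p \<le> 1"
  shows "EB n p (\<lambda>k. (real k - real n * p) ^ 3) = real n * p * (1 - p) * (1 - 2 * p)"
proof -
  define c where "c = real n * p"
  have e: "(\<lambda>k. (real k - c) ^ 3) = (\<lambda>k. real k ^ 3 + ((-3*c) * real k ^ 2 + ((3*c^2) * real k + (- (c^3)))))"
    by (rule ext) (simp add: power3_eq_cube power2_eq_square algebra_simps)
  have "EB n p (\<lambda>k. (real k - c) ^ 3) = (real n * p + 3 * real n * (real n - 1) * p^2 + real n * (real n - 1) * (real n - 2) * p^3) + ((-3*c) * (real n * p + real n * (real n - 1) * p^2) + ((3*c^2) * (real n * p) + (- (c^3))))"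
    using p unfolding e by (simp add: EB_add EB_cmult M1 M2 M3)
  then show ?thesis unfolding c_def by (simp add: power3_eq_cube power2_eq_square algebra_simps)
qed

lemma C4:
  assumes p: "0 \<le> p" "p \<le> 1"
  shows "EB n p (\<lambda>k. (real k - real n * p) ^ 4) = real n * p * (1 - p) * (1 + 3 * (real n - 2) * p * (1 - p))"
proof -
  define c where "c = real n * p"
  have e: "(\<lambda>k. (real k - c) ^ 4) = (\<lambda>k. real k ^ 4 + ((-4*c) * real k ^ 3 + ((6*c^2) * real k ^ 2 + ((-4*c^3) * real k + c^4))))"
    by (rule ext) (simp add: power4_eq_xxxx power3_eq_cube power2_eq_square algebra_simps)
  have "EB n p (\<lambda>k. (real k - c) ^ 4) = (real n * p + 7 * real n * (real n - 1) * p^2 + 6 * real n * (real n - 1) * (real n - 2) * p^3 + real n * (real n - 1) * (real n - 2) * (real n - 3) * p^4) + ((-4*c) * (real n * p + 3 * real n * (real n - 1) * p^2 + real n * (real n - 1) * (real n - 2) * p^3) + ((6*c^2) * (real n * p + real n * (real n - 1) * p^2) + ((-4*c^3) * (real n * p) + c^4)))"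
    using p unfolding e by (simp add: EB_add EB_cmult M1 M2 M3 M4)
  then show ?thesis unfolding c_def by (simp add: power4_eq_xxxx power3_eq_cube power2_eq_square algebra_simps)
qed


lemma geom_id:
  fixes r u0 :: real
  assumes "u0 \<noteq> 0" "r \<noteq> 1"
  shows "2 / (u0 * (1 - r)) = 2 / u0 * (1 + r + r^2 + r^3) + 2 * r^4 / (u0 * (1 - r))"
proof -
  have h: "1 = (1 + r + r^2 + r^3) * (1 - r) + r^4"
    by (simp add: power2_eq_square power3_eq_cube power4_eq_xxxx algebra_simps)
  have "1 - r \<noteq> 0" using assms by auto
  then have "2 / (u0 * (1 - r)) = 2 * ((1 + r + r^2 + r^3) * (1 - r) + r^4) / (u0 * (1 - r))"
    using h by simp
  also have "\<dots> = 2 / u0 * (1 + r + r^2 + r^3) + 2 * r^4 / (u0 * (1 - r))"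
    using assms \<open>1 - r \<noteq> 0\<close> by (simp add: field_simps)
  finally show ?thesis .
qed

lemma pw:
  fixes B D u0 x :: real
  assumes u0: "u0 = B - D" "u0 \<ge> 2"
  shows "(if x \<le> B - 2 then 2 / (B - x) else 1)
     \<le> 2/u0 + 2*(x-D)/u0^2 + 2*(x-D)^2/u0^3 + 2*(x-D)^3/u0^4 + (x-D)^4/u0^4"
proof -
  define r where "r = (x - D) / u0"
  have u0pos: "u0 > 0" using u0 by auto
  have P: "2/u0 + 2*(x-D)/u0^2 + 2*(x-D)^2/u0^3 + 2*(x-D)^3/u0^4 + (x-D)^4/u0^4
      = 2 / u0 * (1 + r + r^2 + r^3) + r^4"
    unfolding r_def using u0pos by (simp add: field_simps power2_eq_square power3_eq_cube power4_eq_xxxx)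
  have ux: "B - x = u0 * (1 - r)" unfolding r_def using u0pos u0(1) by (simp add: field_simps)
  have r4: "r^4 \<ge> 0" by simp
  have pos: "2 / u0 * (1 + r + r^2 + r^3) \<ge> 0" if "r \<ge> 0"
    using that u0pos by simp
  show ?thesis
  proof (cases "x \<le> B - 2")
    case True
    then have "u0 * (1 - r) \<ge> 2" using ux by simp
    then have r1: "r \<noteq> 1" by auto
    have g: "2 / (u0 * (1 - r)) = 2 / u0 * (1 + r + r^2 + r^3) + 2 * r^4 / (u0 * (1 - r))"
      by (rule geom_id) (use u0pos r1 in auto)
    have "2 * r^4 / (u0 * (1 - r)) \<le> r^4"
    proof -
      have "2 / (u0 * (1 - r)) \<le> 1" using \<open>u0 * (1 - r) \<ge> 2\<close> by simp
      then have "r^4 * (2 / (u0 * (1 - r))) \<le> r^4 * 1" using r4 by (rule mult_left_mono)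
      then show ?thesis by (simp add: mult.commute)
    qed
    then show ?thesis using True P ux g by simp
  next
    case False
    then have ul: "u0 * (1 - r) < 2" using ux by simp
    then have "r > 0"
    proof -
      have "u0 * (1 - r) < u0" using ul u0 by linarith
      then have "u0 * r > 0" by (simp add: algebra_simps)
      then show ?thesis using u0pos by (simp add: zero_less_mult_iff)
    qed
    show ?thesis
    proof (cases "r \<ge> 1")
      case True
      then have "r^4 \<ge> 1" by simp
      then show ?thesis using False P pos \<open>r > 0\<close> by simp
    next
      case nr: False
      then have upos: "u0 * (1 - r) > 0" using u0pos by simp
      have g: "2 / (u0 * (1 - r)) = 2 / u0 * (1 + r + r^2 + r^3) + 2 * r^4 / (u0 * (1 - r))"
        by (rule geom_id) (use u0pos nr in auto)
      define w where "w = 2 / (u0 * (1 - r))"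
      have w1: "w > 1" unfolding w_def using upos ul by simp
      have r41: "r^4 \<le> 1" using nr \<open>r > 0\<close> by (simp add: power_le_one)
      have t: "2 * r^4 / (u0 * (1 - r)) = r^4 * w" unfolding w_def by simp
      have g': "w = 2 / u0 * (1 + r + r^2 + r^3) + 2 * r^4 / (u0 * (1 - r))" using g by (simp only: w_def)
      have gw: "w = 2 / u0 * (1 + r + r^2 + r^3) + r^4 * w" using g' by (simp only: t)
      have "2 / u0 * (1 + r + r^2 + r^3) + r^4 = w - r^4 * (w - 1)"
        using gw by (simp add: right_diff_distrib)
      also have "\<dots> \<ge> w - 1 * (w - 1)"
        using r41 w1 by (intro diff_left_mono mult_right_mono) auto
      finally show ?thesis using False P by simp
    qed
  qed
qed


lemma final_ineq:
  fixes D u :: real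
  assumes D: "D > 1" and u: "u \<ge> 2*D+1"
  shows "2/u + 2*D/u^3 + 2*D/u^4 + D*(1+3*D)/u^4 < 1/D"
proof -
  have up: "u > 0" using D u by linarith
  have F1: "u^4 \<ge> (2*D+1)*u^3"
  proof -
    have "u * u^3 \<ge> (2*D+1) * u^3" using u up by (intro mult_right_mono) auto
    then show ?thesis by (simp add: power4_eq_xxxx power3_eq_cube)
  qed
  have F2: "u^3 \<ge> (2*D+1)^2*u"
  proof -
    have "u^2 \<ge> (2*D+1)^2" using u D by (intro power_mono) auto
    then have "u^2 * u \<ge> (2*D+1)^2 * u" using up by (intro mult_right_mono) auto
    then show ?thesis by (simp add: power2_eq_square power3_eq_cube)
  qed
  have F3: "(2*D^2+4*D+1)*u \<ge> (2*D^2+4*D+1)*(2*D+1)"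
    using u D by (intro mult_left_mono) auto
  have F4: "(2*D^2+4*D+1)*(2*D+1) > 3*D^2 + 3*D^3"
  proof -
    have "0 < D*(D*D)" "0 < D*(D*7)" using D by auto
    moreover have "(2*D^2+4*D+1)*(2*D+1) - (3*D^2 + 3*D^3) = 1 + (D*(D*D) + (D*6 + D*(D*7)))"
      by (simp add: power2_eq_square power3_eq_cube algebra_simps)
    ultimately show ?thesis using D by linarith
  qed
  have key: "D * (2*u^3 + 2*D*u + 2*D + D*(1+3*D)) < u^4"
    using F1 F2 F3 F4 by (simp add: power2_eq_square power3_eq_cube algebra_simps)
  have "2/u + 2*D/u^3 + 2*D/u^4 + D*(1+3*D)/u^4 = (2*u^3 + 2*D*u + 2*D + D*(1+3*D)) / u^4"
    using up by (simp add: field_simps power2_eq_square power3_eq_cube power4_eq_xxxx)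
  also have "\<dots> < 1/D"
    using key up D by (simp add: field_simps)
  finally show ?thesis .
qed


lemma EP:
  assumes p: "0 \<le> p" "p \<le> 1"
  shows "EB n p (\<lambda>k. 2/u + 2*(real k - real n * p)/u^2 + 2*(real k - real n * p)^2/u^3
            + 2*(real k - real n * p)^3/u^4 + (real k - real n * p)^4/u^4)
        = 2/u + 2/u^3 * (real n * p * (1 - p)) + 2/u^4 * (real n * p * (1 - p) * (1 - 2 * p))
            + 1/u^4 * (real n * p * (1 - p) * (1 + 3 * (real n - 2) * p * (1 - p)))"
proof -
  define c where "c = real n * p"
  have e: "(\<lambda>k. 2/u + 2*(real k - c)/u^2 + 2*(real k - c)^2/u^3
            + 2*(real k - c)^3/u^4 + (real k - c)^4/u^4)
      = (\<lambda>k. 2/u + ((2/u^2) * (real k - c) + ((2/u^3) * (real k - c)^2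
            + ((2/u^4) * (real k - c)^3 + (1/u^4) * (real k - c)^4))))"
    by (rule ext) simp
  show ?thesis
    using p unfolding c_def[symmetric] e
    by (simp add: EB_add EB_cmult C1 M1 C2[OF p, folded c_def] C3[OF p, folded c_def] C4[OF p, folded c_def] c_def)
qed

theorem mainTheorem14:
  fixes \<beta> \<Delta> :: real and q :: nat
  assumes "0 \<le> \<beta>" and "\<beta> < 1" and "\<Delta> > 1"
    and "real q \<ge> 3 * (1 - \<beta>) * \<Delta> + 2"
  shows "\<forall>\<^sub>F n in sequentially.
           measure_pmf.expectation (binomial_pmf n (\<Delta> / real n))
             (\<lambda>k. f_q \<beta> (real q) (real k)) < 1 / \<Delta>"
proof -
  note b0 = assms(1) and b1 = assms(2) and D1 = assms(3) and qb = assms(4)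
  define B where "B = (real q - 1) / (1 - \<beta>)"
  define u0 where "u0 = B - \<Delta>"
  have c0: "1 - \<beta> > 0" using b1 by simp
  have c1: "1 - \<beta> \<le> 1" using b0 by simp
  have "B \<ge> 3 * \<Delta> + 1"
  proof -
    have "real q - 1 \<ge> 3 * (1 - \<beta>) * \<Delta> + 1" using qb by simp
    also have "3 * (1 - \<beta>) * \<Delta> + 1 \<ge> (3 * \<Delta> + 1) * (1 - \<beta>)"
      using c1 by (simp add: algebra_simps)
    finally have "(3 * \<Delta> + 1) * (1 - \<beta>) \<le> real q - 1" .
    then show ?thesis unfolding B_def using c0 by (simp add: field_simps)
  qed
  then have u0ge: "u0 \<ge> 2 * \<Delta> + 1" unfolding u0_def by simp
  have fq: "f_q \<beta> (real q) x = (if x \<le> B - 2 then 2 / (B - x) else 1)" for x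
  proof -
    have "2 * (1 - \<beta>) / (real q - 1 - (1 - \<beta>) * x) = 2 / (B - x)"
    proof -
      have "B - x = (real q - 1 - (1 - \<beta>) * x) / (1 - \<beta>)"
        unfolding B_def using c0 by (simp add: field_simps)
      then show ?thesis using c0 by simp
    qed
    then show ?thesis unfolding f_q_def B_def by simp
  qed
  show ?thesis
    using eventually_ge_at_top[of "nat \<lceil>\<Delta>\<rceil>"]
  proof eventually_elim
    case (elim n)
    have nD: "real n \<ge> \<Delta>" using elim by linarith
    then have npos: "real n > 0" using D1 by linarith
    define p where "p = \<Delta> / real n"
    have p0: "0 \<le> p" unfolding p_def using npos D1 by simp
    have p1: "p \<le> 1" unfolding p_def using npos nD by simp
    have np: "real n * p = \<Delta>" unfolding p_def using npos by simp
    have u0pos: "u0 > 0" using u0ge D1 by linarith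
    define P where "P = (\<lambda>k::nat. 2/u0 + 2*(real k - real n * p)/u0^2 + 2*(real k - real n * p)^2/u0^3
            + 2*(real k - real n * p)^3/u0^4 + (real k - real n * p)^4/u0^4)"
    have "EB n p (\<lambda>k. f_q \<beta> (real q) (real k)) \<le> EB n p P"
    proof (rule integral_mono)
      show "integrable (measure_pmf (binomial_pmf n p)) (\<lambda>k. f_q \<beta> (real q) (real k))"
        using p0 p1 by simp
      show "integrable (measure_pmf (binomial_pmf n p)) P" using p0 p1 by simp
      fix k
      show "f_q \<beta> (real q) (real k) \<le> P k"
        unfolding fq P_def np by (rule pw) (use u0ge D1 u0_def in auto)
    qed
    also have "EB n p P = 2/u0 + 2/u0^3 * (real n * p * (1 - p)) + 2/u0^4 * (real n * p * (1 - p) * (1 - 2 * p))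
            + 1/u0^4 * (real n * p * (1 - p) * (1 + 3 * (real n - 2) * p * (1 - p)))"
      unfolding P_def by (rule EP[OF p0 p1])
    also have "\<dots> \<le> 2/u0 + 2*\<Delta>/u0^3 + 2*\<Delta>/u0^4 + \<Delta>*(1+3*\<Delta>)/u0^4"
    proof -
      have pp: "p * (1 - p) \<ge> 0" using p0 p1 by simp
      have pq: "p * (1 - p) \<le> 1/4"
      proof -
        have "(p - 1/2)^2 \<ge> 0" by simp
        moreover have "p * (1 - p) = 1/4 - (p - 1/2)^2" by (simp add: power2_eq_square algebra_simps)
        ultimately show ?thesis by linarith
      qed
      have Dp: "\<Delta> * p \<ge> 0" using D1 p0 by simp
      have v2: "real n * p * (1 - p) \<le> \<Delta>"
      proof -
        have "real n * p * (1 - p) = \<Delta> - \<Delta> * p" using np by (simp add: algebra_simps)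
        then show ?thesis using Dp by linarith
      qed
      have v3: "real n * p * (1 - p) * (1 - 2 * p) \<le> \<Delta>"
      proof -
        have t: "p * (3 - 2 * p) \<ge> 0" using p0 p1 by simp
        have "(1 - p) * (1 - 2 * p) = 1 - p * (3 - 2 * p)" by (simp add: algebra_simps)
        then have "(1 - p) * (1 - 2 * p) \<le> 1" using t by linarith
        then have "\<Delta> * ((1 - p) * (1 - 2 * p)) \<le> \<Delta> * 1" using D1 by (intro mult_left_mono) auto
        then show ?thesis using np by (simp add: mult.assoc)
      qed
      have v4: "real n * p * (1 - p) * (1 + 3 * (real n - 2) * p * (1 - p)) \<le> \<Delta> * (1 + 3 * \<Delta>)"
      proof -
        have e1: "3 * (real n - 2) * p * (1 - p) = 3 * ((real n - 2) * (p * (1 - p)))" by (simp add: algebra_simps)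
        have e2: "(real n - 2) * (p * (1 - p)) = real n * p * (1 - p) - 2 * (p * (1 - p))" by (simp add: algebra_simps)
        have a: "(real n - 2) * (p * (1 - p)) \<le> \<Delta>" using e2 v2 pp by linarith
        have "n \<ge> 1" using npos by simp
        then have n1: "real n - 2 \<ge> -1" by simp
        have "(real n - 2) * (p * (1 - p)) \<ge> (-1) * (p * (1 - p))"
          using n1 pp by (intro mult_right_mono) auto
        then have b: "1 + 3 * (real n - 2) * p * (1 - p) \<ge> 0" using e1 pq by linarith
        have a': "1 + 3 * (real n - 2) * p * (1 - p) \<le> 1 + 3 * \<Delta>" using a e1 by linarith
        have "(1 - p) * (1 + 3 * (real n - 2) * p * (1 - p)) \<le> 1 * (1 + 3 * \<Delta>)"
          using p0 p1 a' b by (intro mult_mono) auto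
        then have "\<Delta> * ((1 - p) * (1 + 3 * (real n - 2) * p * (1 - p))) \<le> \<Delta> * (1 + 3 * \<Delta>)"
          using D1 by (intro mult_left_mono) auto
        then show ?thesis using np by (simp add: mult.assoc)
      qed
      have "2/u0^3 * (real n * p * (1 - p)) \<le> 2/u0^3 * \<Delta>"
        using v2 u0pos by (intro mult_left_mono) auto
      moreover have "2/u0^4 * (real n * p * (1 - p) * (1 - 2 * p)) \<le> 2/u0^4 * \<Delta>"
        using v3 u0pos by (intro mult_left_mono) auto
      moreover have "1/u0^4 * (real n * p * (1 - p) * (1 + 3 * (real n - 2) * p * (1 - p))) \<le> 1/u0^4 * (\<Delta> * (1 + 3 * \<Delta>))"
        using v4 u0pos by (intro mult_left_mono) auto
      ultimately show ?thesis by simp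
    qed
    also have "\<dots> < 1 / \<Delta>" by (rule final_ineq) (use D1 u0ge in auto)
    finally show ?case unfolding p_def .
  qed
qed

end
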